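(* Let $A$ be a unital $C^*$-algebra and let $p,q\in A$ be properly infinite, full projections with $p\sim q$ (Murray–von Neumann equivalent). Suppose there is a properly infinite, full projection $r\in A$ with $pr=0$ and $qr=0$. Then $p\sim_h q$, i.e. $p$ and $q$ are connected by a norm-continuous path of projections in $A$ (equivalently $q=upu^*$ for some $u\in\mathcal U^0(A)$).
   Context: A projection $p$ is properly infinite if there are mutually orthogonal subprojections $e,f\le p$ with $e\sim p\sim f$. A projection is full if it is not contained in any proper closed two-sided ideal. $\mathcal U^0(A)$ denotes the connected component of the identity in the unitary group of $A$. *)

theory Defs
  imports Complex_Main
begin

text \<open>The real-normed structure comes from the library classes; the complex scalar
  multiplication is an additional operation extending the real one.\<close>

class cstar_algebra_1 = banach + real_normed_algebra_1 +
  fixes cstar :: "'a \<Rightarrow> 'a"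
    and scaleC :: "complex \<Rightarrow> 'a \<Rightarrow> 'a"
  assumes scaleC_of_real: "scaleC (of_real r) x = scaleR r x"
    and scaleC_add_right: "scaleC a (x + y) = scaleC a x + scaleC a y"
    and scaleC_add_left: "scaleC (a + b) x = scaleC a x + scaleC b x"
    and scaleC_scaleC: "scaleC a (scaleC b x) = scaleC (a * b) x"
    and scaleC_one: "scaleC 1 x = x"
    and mult_scaleC_left: "scaleC a x * y = scaleC a (x * y)"
    and mult_scaleC_right: "x * scaleC a y = scaleC a (x * y)"
    and norm_scaleC: "norm (scaleC a x) = cmod a * norm x"
    and cstar_add: "cstar (x + y) = cstar x + cstar y"
    and cstar_scaleC: "cstar (scaleC a x) = scaleC (cnj a) (cstar x)"
    and cstar_mult: "cstar (x * y) = cstar y * cstar x"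
    and cstar_cstar: "cstar (cstar x) = x"
    and cstar_identity: "norm (cstar x * x) = (norm x)\<^sup>2"

definition projection :: "'a::cstar_algebra_1 \<Rightarrow> bool" where
  "projection p \<longleftrightarrow> p * p = p \<and> cstar p = p"

definition mvn_equiv :: "'a::cstar_algebra_1 \<Rightarrow> 'a \<Rightarrow> bool" where
  "mvn_equiv p q \<longleftrightarrow> (\<exists>v. cstar v * v = p \<and> v * cstar v = q)"

definition subprojection :: "'a::cstar_algebra_1 \<Rightarrow> 'a \<Rightarrow> bool" where
  "subprojection e p \<longleftrightarrow> projection e \<and> p * e = e"

definition properly_infinite :: "'a::cstar_algebra_1 \<Rightarrow> bool" where
  "properly_infinite p \<longleftrightarrow> projection p \<and>
     (\<exists>e f. subprojection e p \<and> subprojection f p \<and> e * f = 0 \<and>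
            mvn_equiv e p \<and> mvn_equiv p f)"

definition closed_ideal :: "'a::cstar_algebra_1 set \<Rightarrow> bool" where
  "closed_ideal I \<longleftrightarrow> 0 \<in> I \<and> (\<forall>x\<in>I. \<forall>y\<in>I. x + y \<in> I) \<and>
     (\<forall>c x. x \<in> I \<longrightarrow> scaleC c x \<in> I) \<and>
     (\<forall>a x. x \<in> I \<longrightarrow> a * x \<in> I \<and> x * a \<in> I) \<and> closed I"

definition full :: "'a::cstar_algebra_1 \<Rightarrow> bool" where
  "full p \<longleftrightarrow> (\<forall>I. closed_ideal I \<and> I \<noteq> UNIV \<longrightarrow> p \<notin> I)"

definition homotopic_proj :: "'a::cstar_algebra_1 \<Rightarrow> 'a \<Rightarrow> bool" where
  "homotopic_proj p q \<longleftrightarrow> (\<exists>\<gamma>::real \<Rightarrow> 'a. continuous_on {0..1} \<gamma> \<and>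
     (\<forall>t\<in>{0..1}. projection (\<gamma> t)) \<and> \<gamma> 0 = p \<and> \<gamma> 1 = q)"

end

theory Submission
  imports Defs "HOL-Analysis.Analysis" "HOL-Computational_Algebra.Formal_Power_Series"
begin

context
  fixes dummy :: "'a::cstar_algebra_1"
begin
end

lemma cstar_zero[simp]: "cstar (0::'a::cstar_algebra_1) = 0"
proof -
  have "cstar (0::'a) = cstar (0+0)" by simp
  also have "\<dots> = cstar 0 + cstar 0" by (rule cstar_add)
  finally show ?thesis by simp
qed

lemma cstar_minus[simp]: "cstar (- x) = - cstar (x::'a::cstar_algebra_1)"
proof -
  have "cstar (-x) + cstar x = cstar (-x + x)" by (rule cstar_add[symmetric])
  hence "cstar (-x) + cstar x = 0" by simp
  thus ?thesis by (simp add: eq_neg_iff_add_eq_0)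
qed

lemma cstar_diff[simp]: "cstar (x - y) = cstar x - cstar (y::'a::cstar_algebra_1)"
  unfolding diff_conv_add_uminus by (simp only: cstar_add cstar_minus)

lemma cstar_add'[simp]: "cstar (x + y) = cstar x + cstar (y::'a::cstar_algebra_1)"
  by (rule cstar_add)

lemma cstar_mult'[simp]: "cstar (x * y) = cstar y * cstar (x::'a::cstar_algebra_1)"
  by (rule cstar_mult)

lemma cstar_cstar'[simp]: "cstar (cstar x) = (x::'a::cstar_algebra_1)"
  by (rule cstar_cstar)

lemma cstar_scaleR[simp]: "cstar (scaleR a x) = scaleR a (cstar (x::'a::cstar_algebra_1))"
  by (metis cstar_scaleC scaleC_of_real complex_cnj_complex_of_real)

lemma cstar_one[simp]: "cstar (1::'a::cstar_algebra_1) = 1"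
proof -
  have "cstar (1 * cstar (1::'a)) = cstar (cstar 1) * cstar 1" by (rule cstar_mult)
  thus ?thesis by simp
qed

lemma norm_cstar[simp]: "norm (cstar x) = norm (x::'a::cstar_algebra_1)"
proof -
  have le: "norm y \<le> norm (cstar y)" for y :: 'a
  proof (cases "norm y = 0")
    case True thus ?thesis by simp
  next
    case False
    have "(norm y)^2 = norm (cstar y * y)" by (rule cstar_identity[symmetric])
    also have "\<dots> \<le> norm (cstar y) * norm y" by (rule norm_mult_ineq)
    finally show ?thesis using False by (simp add: power2_eq_square)
  qed
  show ?thesis using le[of x] le[of "cstar x"] by simp
qed

lemma cstar_zero_iff: "cstar y * y = 0 \<Longrightarrow> (y::'a::cstar_algebra_1) = 0"
proof -
  assume "cstar y * y = 0"
  hence "(norm y)^2 = 0" using cstar_identity[of y] by simp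
  thus ?thesis by simp
qed

lemma bounded_linear_cstar: "bounded_linear (cstar :: 'a::cstar_algebra_1 \<Rightarrow> 'a)"
  by (rule bounded_linear_intro[where K=1]) auto

lemma proj_norm_le: "projection (P::'a::cstar_algebra_1) \<Longrightarrow> norm P \<le> 1"
proof -
  assume "projection P"
  then have "P * P = P" "cstar P = P" by (auto simp: projection_def)
  then have "(norm P)^2 = norm P" using cstar_identity[of P] by simp
  hence "norm P * norm P = norm P * 1" by (simp add: power2_eq_square)
  hence "norm P = 0 \<or> norm P = 1" by (simp only: mult_cancel_left)
  thus ?thesis by auto
qed

lemma pisom_right: assumes "cstar v * v = P" "projection P" shows "v * P = (v::'a::cstar_algebra_1)"
proof -
  have PP: "P * P = P" "cstar P = P" using assms(2) by (auto simp: projection_def)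
  have "cstar (v - v * P) * (v - v * P) = 0"
    using PP assms(1) by (simp add: algebra_simps mult.assoc[symmetric])
  hence "v - v * P = 0" by (rule cstar_zero_iff)
  thus ?thesis by simp
qed

lemma pisom_left: assumes "v * cstar v = Q" "projection Q" shows "Q * v = (v::'a::cstar_algebra_1)"
proof -
  have "cstar v * Q = cstar v" using pisom_right[of "cstar v" Q] assms by simp
  hence "cstar (cstar v * Q) = v" by simp
  thus ?thesis using assms(2) by (simp add: projection_def)
qed

lemma scaleC_diff: "scaleC c (a - b) = scaleC c a - scaleC c (b::'a::cstar_algebra_1)"
proof -
  have "scaleC c (a - b) + scaleC c b = scaleC c a" by (simp add: scaleC_add_right[symmetric])
  thus ?thesis by (simp add: eq_diff_eq)
qed

lemma scaleC_zero[simp]: "scaleC c (0::'a::cstar_algebra_1) = 0"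
  using scaleC_diff[of c 0 0] by simp

lemma tendsto_scaleC: assumes "f \<longlonglongrightarrow> (x::'a::cstar_algebra_1)"
  shows "(\<lambda>n. scaleC c (f n)) \<longlonglongrightarrow> scaleC c x"
proof -
  have "(\<lambda>n. f n - x) \<longlonglongrightarrow> 0" using assms by (rule LIM_zero)
  hence "(\<lambda>n. norm (f n - x)) \<longlonglongrightarrow> 0" by (rule tendsto_norm_zero)
  hence "(\<lambda>n. cmod c * norm (f n - x)) \<longlonglongrightarrow> 0" by (rule tendsto_mult_right_zero)
  hence "(\<lambda>n. norm (scaleC c (f n) - scaleC c x)) \<longlonglongrightarrow> 0"
    by (simp add: scaleC_diff[symmetric] norm_scaleC)
  hence "(\<lambda>n. scaleC c (f n) - scaleC c x) \<longlonglongrightarrow> 0" by (rule tendsto_norm_zero_cancel)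
  thus ?thesis by (rule LIM_zero_cancel)
qed

lemma r_isoms:
  assumes "properly_infinite (r::'a::cstar_algebra_1)"
  obtains s1 s2 where "cstar s1 * s1 = r" "cstar s2 * s2 = r" "r * s1 = s1" "r * s2 = s2"
    "cstar s1 * s2 = 0"
proof -
  from assms obtain e f where r: "projection r" and e: "subprojection e r" and f: "subprojection f r"
    and ef: "e * f = 0" and er: "mvn_equiv e r" and rf: "mvn_equiv r f"
    unfolding properly_infinite_def by blast
  from er obtain v1 where v1: "cstar v1 * v1 = e" "v1 * cstar v1 = r" unfolding mvn_equiv_def by blast
  from rf obtain v2 where v2: "cstar v2 * v2 = r" "v2 * cstar v2 = f" unfolding mvn_equiv_def by blast
  define s1 where "s1 = cstar v1"
  have s1: "cstar s1 * s1 = r" "s1 * cstar s1 = e" using v1 by (auto simp: s1_def)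
  have ep: "projection e" "r * e = e" using e by (auto simp: subprojection_def)
  have fp: "projection f" "r * f = f" using f by (auto simp: subprojection_def)
  have es1: "e * s1 = s1" by (rule pisom_left[OF s1(2) ep(1)])
  have fs2: "f * s2 = s2" if "s2 = v2" for s2 using pisom_left[OF v2(2) fp(1)] that by simp
  have "r * s1 = (r * e) * s1" using es1 by (simp add: mult.assoc)
  hence rs1: "r * s1 = s1" using ep(2) es1 by simp
  have "r * v2 = (r * f) * v2" using fs2 by (simp add: mult.assoc)
  hence rs2: "r * v2 = v2" using fp(2) fs2 by simp
  have ce: "cstar e = e" using ep(1) by (simp add: projection_def)
  have A1: "cstar s1 * e = cstar s1"
  proof -
    have "cstar s1 = cstar (e * s1)" using es1 by simp
    thus ?thesis using ce by simp
  qed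
  have A2: "f * v2 = v2" using fs2 by simp
  have "cstar s1 * (e * f) * v2 = (cstar s1 * e) * (f * v2)" by (simp only: mult.assoc)
  also have "\<dots> = cstar s1 * v2" by (simp only: A1 A2)
  finally have "cstar s1 * v2 = cstar s1 * (e * f) * v2" by (rule sym)
  hence "cstar s1 * v2 = 0" using ef by simp
  thus ?thesis using that[of s1 v2] s1 v2 rs1 rs2 by simp
qed

lemma sum_form:
  assumes "properly_infinite (r::'a::cstar_algebra_1)"
  shows "\<exists>y z. y1 * r * z1 + y2 * r * z2 = y * r * z"
proof -
  obtain s1 s2 where s: "cstar s1 * s1 = r" "cstar s2 * s2 = r" "r * s1 = s1" "r * s2 = s2"
    "cstar s1 * s2 = 0" using r_isoms[OF assms] by blast
  have "cstar (cstar s1 * s2) = cstar s2 * s1" by simp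
  hence s21: "cstar s2 * s1 = 0" using s(5) by simp
  have rr: "r * r = r" using assms by (simp add: properly_infinite_def projection_def)
  have "(y1 * cstar s1 + y2 * cstar s2) * r * (s1 * z1 + s2 * z2)
      = (y1 * cstar s1 + y2 * cstar s2) * (s1 * z1 + s2 * z2)"
  proof -
    have "r * (s1 * z1 + s2 * z2) = s1 * z1 + s2 * z2"
      by (simp add: distrib_left mult.assoc[symmetric] s(3,4))
    thus ?thesis by (simp add: mult.assoc)
  qed
  also have "\<dots> = y1 * (cstar s1 * s1) * z1 + y1 * (cstar s1 * s2) * z2
      + y2 * (cstar s2 * s1) * z1 + y2 * (cstar s2 * s2) * z2"
    by (simp add: algebra_simps)
  also have "\<dots> = y1 * r * z1 + y2 * r * z2" using s s21 by simp
  finally show ?thesis by (intro exI) (rule sym)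
qed

lemma full_approx:
  assumes "properly_infinite (r::'a::cstar_algebra_1)" "full r" "\<epsilon> > 0"
  shows "\<exists>y z. norm (x - y * r * z) < \<epsilon>"
proof -
  define S where "S = {a. \<exists>y z. a = y * r * z}"
  define I where "I = closure S"
  have Sadd: "a \<in> S \<Longrightarrow> b \<in> S \<Longrightarrow> a + b \<in> S" for a b
    using sum_form[OF assms(1)] unfolding S_def by blast
  have Sc: "a \<in> S \<Longrightarrow> scaleC c a \<in> S" for a c
  proof -
    assume "a \<in> S" then obtain y z where "a = y * r * z" unfolding S_def by blast
    hence "scaleC c a = (scaleC c y) * r * z" by (simp add: mult_scaleC_left)
    thus ?thesis unfolding S_def by blast
  qed
  have Sl: "a \<in> S \<Longrightarrow> b * a \<in> S" for a b
  proof -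
    assume "a \<in> S" then obtain y z where "a = y * r * z" unfolding S_def by blast
    hence "b * a = (b * y) * r * z" by (simp add: mult.assoc)
    thus ?thesis unfolding S_def by blast
  qed
  have Sr: "a \<in> S \<Longrightarrow> a * b \<in> S" for a b
  proof -
    assume "a \<in> S" then obtain y z where "a = y * r * z" unfolding S_def by blast
    hence "a * b = y * r * (z * b)" by (simp add: mult.assoc)
    thus ?thesis unfolding S_def by blast
  qed
  have c1: "0 \<in> I" unfolding I_def S_def by (rule closure_subset[THEN subsetD]) (auto intro!: exI[of _ 0])
  have c2: "closed I" unfolding I_def by simp
  have c3: "x + y \<in> I" if xy: "x \<in> I" "y \<in> I" for x y
  proof -
    obtain f g where f: "\<forall>n. f n \<in> S" "f \<longlonglongrightarrow> x" and g: "\<forall>n. g n \<in> S" "g \<longlonglongrightarrow> y"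
      using xy unfolding I_def closure_sequential by blast
    show "x + y \<in> I" unfolding I_def closure_sequential
      using f g Sadd by (intro exI[of _ "\<lambda>n. f n + g n"]) (auto intro: tendsto_add)
  qed
  have c4: "scaleC c x \<in> I" if xy: "x \<in> I" for c x
  proof -
    obtain f where f: "\<forall>n. f n \<in> S" "f \<longlonglongrightarrow> x"
      using xy unfolding I_def closure_sequential by blast
    show "scaleC c x \<in> I" unfolding I_def closure_sequential
      using f Sc by (intro exI[of _ "\<lambda>n. scaleC c (f n)"]) (auto intro: tendsto_scaleC)
  qed
  have c5: "a * x \<in> I \<and> x * a \<in> I" if xy: "x \<in> I" for a x
  proof -
    obtain f where f: "\<forall>n. f n \<in> S" "f \<longlonglongrightarrow> x"
      using xy unfolding I_def closure_sequential by blast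
    show "a * x \<in> I \<and> x * a \<in> I" unfolding I_def closure_sequential
      using f Sl Sr
      by (intro conjI exI[of _ "\<lambda>n. a * f n"] exI[of _ "\<lambda>n. f n * a"]) (auto intro: tendsto_mult)
  qed
  have "closed_ideal I" unfolding closed_ideal_def using c1 c2 c3 c4 c5 by blast
  moreover have "r \<in> I" unfolding I_def S_def
    by (rule closure_subset[THEN subsetD]) (auto intro!: exI[of _ 1])
  ultimately have "I = UNIV" using assms(2) unfolding full_def by blast
  hence "x \<in> closure S" unfolding I_def by simp
  then obtain a where "a \<in> S" "dist a x < \<epsilon>" using closure_approachable assms(3) by blast
  thus ?thesis unfolding S_def by (auto simp: dist_norm norm_minus_commute) blast
qed

definition PS :: "(nat \<Rightarrow> real) \<Rightarrow> 'a::cstar_algebra_1 \<Rightarrow> 'a" where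
  "PS \<alpha> u = (\<Sum>k. \<alpha> k *\<^sub>R u ^ k)"

lemma ps_norm_summable:
  fixes u :: "'a::cstar_algebra_1"
  assumes "\<And>k. \<bar>\<alpha> k\<bar> \<le> 1" "norm u < 1"
  shows "summable (\<lambda>k. norm (\<alpha> k *\<^sub>R u ^ k))"
proof (rule summable_comparison_test')
  show "summable (\<lambda>k. norm u ^ k)" using assms(2) by (intro summable_geometric) simp
  fix k :: nat
  have "norm (norm (\<alpha> k *\<^sub>R u ^ k)) = \<bar>\<alpha> k\<bar> * norm (u ^ k)" by simp
  also have "\<dots> \<le> 1 * norm u ^ k"
    by (intro mult_mono assms(1) norm_power_ineq) auto
  finally show "norm (norm (\<alpha> k *\<^sub>R u ^ k)) \<le> norm u ^ k" by simp
qed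

lemma ps_summable:
  fixes u :: "'a::cstar_algebra_1"
  assumes "\<And>k. \<bar>\<alpha> k\<bar> \<le> 1" "norm u < 1"
  shows "summable (\<lambda>k. \<alpha> k *\<^sub>R u ^ k)"
  by (rule summable_norm_cancel[OF ps_norm_summable[OF assms]])

lemma ps_mult:
  fixes u :: "'a::cstar_algebra_1"
  assumes "\<And>k. \<bar>\<alpha> k\<bar> \<le> 1" "\<And>k. \<bar>\<beta> k\<bar> \<le> 1" "norm u < 1"
  shows "PS \<alpha> u * PS \<beta> u = (\<Sum>k. (\<Sum>i\<le>k. \<alpha> i * \<beta> (k - i)) *\<^sub>R u ^ k)"
proof -
  have "PS \<alpha> u * PS \<beta> u = (\<Sum>k. \<Sum>i\<le>k. (\<alpha> i *\<^sub>R u ^ i) * (\<beta> (k - i) *\<^sub>R u ^ (k - i)))"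
    unfolding PS_def
    by (rule Cauchy_product[OF ps_norm_summable[OF assms(1,3)] ps_norm_summable[OF assms(2,3)]])
  also have "\<dots> = (\<Sum>k. (\<Sum>i\<le>k. \<alpha> i * \<beta> (k - i)) *\<^sub>R u ^ k)"
  proof (rule suminf_cong)
    fix k
    have "(\<Sum>i\<le>k. (\<alpha> i *\<^sub>R u ^ i) * (\<beta> (k - i) *\<^sub>R u ^ (k - i)))
        = (\<Sum>i\<le>k. (\<alpha> i * \<beta> (k - i)) *\<^sub>R u ^ k)"
    proof (rule sum.cong)
      fix i assume "i \<in> {..k}"
      hence "u ^ i * u ^ (k - i) = u ^ k" by (simp add: power_add[symmetric])
      thus "(\<alpha> i *\<^sub>R u ^ i) * (\<beta> (k - i) *\<^sub>R u ^ (k - i)) = (\<alpha> i * \<beta> (k - i)) *\<^sub>R u ^ k"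
        by simp
    qed simp
    also have "\<dots> = (\<Sum>i\<le>k. \<alpha> i * \<beta> (k - i)) *\<^sub>R u ^ k" by (simp add: scaleR_sum_left)
    finally show "(\<Sum>i\<le>k. (\<alpha> i *\<^sub>R u ^ i) * (\<beta> (k - i) *\<^sub>R u ^ (k - i)))
        = (\<Sum>i\<le>k. \<alpha> i * \<beta> (k - i)) *\<^sub>R u ^ k" .
  qed
  finally show ?thesis .
qed

lemma pow_commute: "a * u = u * a \<Longrightarrow> a * u ^ k = u ^ k * (a::'a::cstar_algebra_1)"
  by (induction k) (simp_all add: mult.assoc[symmetric], metis mult.assoc)

lemma ps_commute:
  fixes u :: "'a::cstar_algebra_1"
  assumes "\<And>k. \<bar>\<alpha> k\<bar> \<le> 1" "norm u < 1" "a * u = u * a"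
  shows "a * PS \<alpha> u = PS \<alpha> u * a"
proof -
  have s: "summable (\<lambda>k. \<alpha> k *\<^sub>R u ^ k)" by (rule ps_summable[OF assms(1,2)])
  have "a * PS \<alpha> u = (\<Sum>k. a * (\<alpha> k *\<^sub>R u ^ k))" unfolding PS_def by (rule suminf_mult[OF s, symmetric])
  also have "\<dots> = (\<Sum>k. (\<alpha> k *\<^sub>R u ^ k) * a)" using pow_commute[OF assms(3)] by simp
  also have "\<dots> = PS \<alpha> u * a" unfolding PS_def by (rule suminf_mult2[OF s, symmetric])
  finally show ?thesis .
qed

lemma cstar_pow: "cstar u = u \<Longrightarrow> cstar (u ^ k) = (u::'a::cstar_algebra_1) ^ k"
  by (induction k) (simp_all, metis pow_commute)

lemma ps_selfadj:
  fixes u :: "'a::cstar_algebra_1"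
  assumes "\<And>k. \<bar>\<alpha> k\<bar> \<le> 1" "norm u < 1" "cstar u = u"
  shows "cstar (PS \<alpha> u) = PS \<alpha> u"
proof -
  have s: "summable (\<lambda>k. \<alpha> k *\<^sub>R u ^ k)" by (rule ps_summable[OF assms(1,2)])
  show ?thesis unfolding PS_def
    using bounded_linear.suminf[OF bounded_linear_cstar s] cstar_pow[OF assms(3)] by simp
qed

lemma neumann:
  fixes u :: "'a::cstar_algebra_1"
  assumes "norm u < 1"
  shows "PS (\<lambda>_. 1) u * (1 - u) = 1"
proof -
  have s: "summable (\<lambda>k. (1::real) *\<^sub>R u ^ k)" by (rule ps_summable) (use assms in auto)
  have "PS (\<lambda>_. 1) u * (1 - u) = (\<Sum>k. ((1::real) *\<^sub>R u ^ k) * (1 - u))"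
    unfolding PS_def by (rule suminf_mult2[OF s])
  also have "\<dots> = (\<Sum>k. u ^ k - u ^ Suc k)" by (simp add: right_diff_distrib power_Suc2 del: power_Suc)
  also have "\<dots> = 1"
  proof (rule sums_unique[symmetric])
    have "(\<lambda>n. -(u ^ n)) \<longlonglongrightarrow> 0" using LIMSEQ_power_zero[OF assms] tendsto_minus by fastforce
    from telescope_sums[OF this] show "(\<lambda>k. u ^ k - u ^ Suc k) sums 1" by simp
  qed
  finally show ?thesis .
qed

lemma gchoose_bound:
  assumes "\<bar>a\<bar> \<le> (1::real)" shows "\<bar>a gchoose k\<bar> \<le> 1"
proof (induction k)
  case 0 thus ?case by simp
next
  case (Suc k)
  have eq: "a gchoose Suc k = (a - of_nat k) / of_nat (Suc k) * (a gchoose k)"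
  proof -
    have "of_nat (Suc k) * (a gchoose Suc k) = a * (a gchoose k) - of_nat k * (a gchoose k)"
      using gbinomial_mult_1[of a k] by (simp only: add_diff_cancel_left')
    also have "\<dots> = (a - of_nat k) * (a gchoose k)" by (rule left_diff_distrib[symmetric])
    finally show ?thesis by (simp add: field_simps del: of_nat_Suc)
  qed
  have h: "\<bar>a - of_nat k\<bar> \<le> of_nat (Suc k)" using assms by linarith
  have "\<bar>(a - of_nat k) / of_nat (Suc k)\<bar> = \<bar>a - of_nat k\<bar> / of_nat (Suc k)"
    by (simp add: abs_divide)
  also have "\<dots> \<le> 1" using h by (simp add: divide_le_eq_1)
  finally have "\<bar>(a - of_nat k) / of_nat (Suc k)\<bar> \<le> 1" .
  hence "\<bar>(a - of_nat k) / of_nat (Suc k) * (a gchoose k)\<bar> \<le> 1 * 1"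
    unfolding abs_mult by (intro mult_mono Suc) auto
  thus ?case using eq by simp
qed

definition bco :: "nat \<Rightarrow> real" where "bco k = ((1/2) gchoose k) * (-1) ^ k"
definition aco :: "nat \<Rightarrow> real" where "aco k = ((-1/2) gchoose k) * (-1) ^ k"

lemma bco_bound: "\<bar>bco k\<bar> \<le> 1" unfolding bco_def abs_mult power_abs abs_neg_one power_one mult_1_right by (rule gchoose_bound) simp
lemma aco_bound: "\<bar>aco k\<bar> \<le> 1" unfolding aco_def abs_mult power_abs abs_neg_one power_one mult_1_right by (rule gchoose_bound) simp


lemma conv_sign:
  "(\<Sum>i\<le>k. ((c::real) gchoose i) * (-1)^i * ((d gchoose (k - i)) * (-1)^(k-i))) = ((c + d) gchoose k) * (-1)^k"
proof -
  have "(\<Sum>i\<le>k. (c gchoose i) * (-1)^i * ((d gchoose (k - i)) * (-1)^(k-i)))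
      = (\<Sum>i\<le>k. ((c gchoose i) * (d gchoose (k - i))) * (-1)^k)"
  proof (rule sum.cong)
    fix i assume "i \<in> {..k}"
    hence e: "(-1::real)^i * (-1)^(k-i) = (-1)^k" by (simp add: power_add[symmetric])
    have "(c gchoose i) * (-1)^i * ((d gchoose (k - i)) * (-1)^(k-i)) = ((c gchoose i) * (d gchoose (k - i))) * ((-1::real)^i * (-1)^(k-i))"
      by (simp only: mult_ac)
    thus "(c gchoose i) * (-1)^i * ((d gchoose (k - i)) * (-1)^(k-i)) = ((c gchoose i) * (d gchoose (k - i))) * (-1)^k"
      by (simp only: e)
  qed simp
  also have "\<dots> = (\<Sum>i=0..k. (c gchoose i) * (d gchoose (k - i))) * (-1)^k"
    by (simp add: sum_distrib_right atMost_atLeast0)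
  also have "\<dots> = ((c + d) gchoose k) * (-1)^k" by (simp add: gbinomial_Vandermonde)
  finally show ?thesis .
qed

lemma aco_conv: "(\<Sum>i\<le>k. aco i * aco (k - i)) = 1"
proof -
  have "(\<Sum>i\<le>k. aco i * aco (k - i)) = ((-1/2 + -1/2) gchoose k) * (-1)^k"
    unfolding aco_def by (rule conv_sign)
  also have "((-1/2 + -1/2::real) gchoose k) = (-1)^k"
    using gbinomial_negated_upper[of "-1::real" k] binomial_gbinomial[of k k] by simp
  finally show ?thesis by (simp add: power_mult_distrib[symmetric])
qed

lemma bco_conv: "(\<Sum>i\<le>k. bco i * bco (k - i)) = (if k = 0 then 1 else if k = 1 then -1 else 0)"
proof -
  have "(\<Sum>i\<le>k. bco i * bco (k - i)) = ((1/2 + 1/2) gchoose k) * (-1)^k"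
    unfolding bco_def by (rule conv_sign)
  also have "((1/2 + 1/2::real) gchoose k) = of_nat (1 choose k)"
    using binomial_gbinomial[of 1 k, where 'a=real] by simp
  finally have eq: "(\<Sum>i\<le>k. bco i * bco (k - i)) = real (1 choose k) * (-1)^k" .
  show ?thesis
  proof (cases "k \<le> 1")
    case True then have "k = 0 \<or> k = 1" by auto
    thus ?thesis using eq by auto
  next
    case False
    hence z: "(1::nat) choose k = 0" by (intro binomial_eq_0) simp
    have "k \<noteq> 0" "k \<noteq> 1" using False by auto
    thus ?thesis using eq by (simp only: z if_False of_nat_0 mult_zero_left)
  qed
qed

definition SQ :: "'a::cstar_algebra_1 \<Rightarrow> 'a" where "SQ u = PS bco u"
definition ISQ :: "'a::cstar_algebra_1 \<Rightarrow> 'a" where "ISQ u = PS aco u"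

lemma SQ_sq: assumes "norm (u::'a::cstar_algebra_1) < 1" shows "SQ u * SQ u = 1 - u"
proof -
  have "SQ u * SQ u = (\<Sum>k. (\<Sum>i\<le>k. bco i * bco (k - i)) *\<^sub>R u ^ k)"
    unfolding SQ_def by (rule ps_mult[OF bco_bound bco_bound assms])
  also have "\<dots> = (\<Sum>k\<in>{0,1}. (\<Sum>i\<le>k. bco i * bco (k - i)) *\<^sub>R u ^ k)"
    by (rule suminf_finite) (auto simp: bco_conv)
  also have "\<dots> = 1 - u" by (simp add: bco_conv)
  finally show ?thesis .
qed

lemma ISQ_sq: assumes "norm (u::'a::cstar_algebra_1) < 1" shows "ISQ u * ISQ u * (1 - u) = 1"
proof -
  have "ISQ u * ISQ u = PS (\<lambda>_. 1) u"
    unfolding ISQ_def PS_def[of "\<lambda>_. 1"] by (subst ps_mult[OF aco_bound aco_bound assms]) (simp add: aco_conv)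
  thus ?thesis using neumann[OF assms] by simp
qed

lemma dual: "a * b = c \<Longrightarrow> cstar b * cstar a = cstar (c::'a::cstar_algebra_1)"
  by (drule arg_cong[where f=cstar]) simp

lemma pos_corner:
  fixes P R T :: "'a::cstar_algebra_1"
  assumes P: "projection P" and R: "projection R" and PR: "P * R = 0"
    and RT: "R * T = T" and TP: "T * P = T" and nT: "norm T < 1"
  shows "norm (P - cstar T * T) \<le> 1"
proof -
  have PP: "P * P = P" "cstar P = P" using P by (auto simp: projection_def)
  have RR: "R * R = R" "cstar R = R" using R by (auto simp: projection_def)
  have RP: "R * P = 0" using dual[OF PR] PP(2) RR(2) by simp
  define u where "u = cstar T * T"
  have nu: "norm u < 1"
  proof -
    have "norm u \<le> norm T * norm T" unfolding u_def using norm_mult_ineq[of "cstar T" T] by simp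
    also have "\<dots> \<le> norm T" by (rule mult_left_le_one_le) (use nT in auto)
    also have "\<dots> < 1" by (rule nT)
    finally show ?thesis .
  qed
  have cu: "cstar u = u" unfolding u_def by simp
  have cTP: "P * cstar T = cstar T" using dual[OF TP] PP(2) by simp
  have cTR: "cstar T * R = cstar T" using dual[OF RT] RR(2) by simp
  have Pu: "P * u = u" "u * P = u" unfolding u_def using cTP TP by (auto simp: mult.assoc[symmetric]) (simp add: mult.assoc)
  define S where "S = P * SQ u"
  have comm: "P * SQ u = SQ u * P" unfolding SQ_def by (rule ps_commute[OF bco_bound nu]) (simp add: Pu)
  have cS: "cstar S = S" unfolding S_def using comm PP ps_selfadj[OF bco_bound nu cu] by (simp add: SQ_def)
  have SS: "S * S = P - u"
  proof -
    have "S * S = P * (SQ u * P) * SQ u" unfolding S_def by (simp only: mult.assoc)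
    also have "\<dots> = P * P * (SQ u * SQ u)" by (simp only: comm[symmetric] mult.assoc)
    also have "\<dots> = P * (1 - u)" using SQ_sq[OF nu] PP by simp
    also have "\<dots> = P - u" using Pu by (simp add: right_diff_distrib)
    finally show ?thesis .
  qed
  define X where "X = T + S"
  have "P * T = (P * R) * T" using RT by (simp add: mult.assoc)
  hence PT: "P * T = 0" using PR by simp
  have "cstar T * S = (cstar T * R) * P * SQ u" unfolding S_def using cTR by (simp add: mult.assoc)
  also have "\<dots> = cstar T * (R * P) * SQ u" by (simp add: mult.assoc)
  finally have c1: "cstar T * S = 0" using RP by simp
  have "S * T = SQ u * (P * T)" unfolding S_def using comm by (simp add: mult.assoc)
  hence c2: "S * T = 0" using PT by simp
  have XX: "cstar X * X = P"
    unfolding X_def using c1 c2 cS SS by (simp add: algebra_simps u_def)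
  have nX: "norm X \<le> 1"
  proof -
    have "(norm X)^2 = norm P" using XX cstar_identity[of X] by simp
    also have "\<dots> \<le> 1" by (rule proj_norm_le[OF P])
    finally show ?thesis by (simp add: power_le_one_iff)
  qed
  have PX: "P * X = S" unfolding X_def S_def using PT PP by (simp add: algebra_simps mult.assoc[symmetric])
  have nS: "norm S \<le> 1"
  proof -
    have "norm S \<le> norm P * norm X" using PX norm_mult_ineq[of P X] by simp
    also have "\<dots> \<le> 1 * 1" by (intro mult_mono proj_norm_le[OF P] nX) auto
    finally show ?thesis by simp
  qed
  have "norm (P - u) = (norm S)^2" using SS cS cstar_identity[of S] by simp
  also have "\<dots> \<le> 1" using nS by (simp add: power_le_one)
  finally show ?thesis unfolding u_def .
qed

lemma rotation:
  fixes P Q v :: "'a::cstar_algebra_1"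
  assumes P: "projection P" and Q: "projection Q" and vP: "cstar v * v = P" and vQ: "v * cstar v = Q"
    and PQ: "P * Q = 0"
  shows "homotopic_proj P Q"
proof -
  have PP: "P * P = P" "cstar P = P" using P by (auto simp: projection_def)
  have QQ: "Q * Q = Q" "cstar Q = Q" using Q by (auto simp: projection_def)
  have QP: "Q * P = 0" using dual[OF PQ] PP(2) QQ(2) by simp
  have r1: "v * P = v" by (rule pisom_right[OF vP P])
  have r2: "Q * v = v" by (rule pisom_left[OF vQ Q])
  have "P * v = (P * Q) * v" using r2 by (simp add: mult.assoc)
  hence r3: "P * v = 0" using PQ by simp
  have "v * Q = v * (P * Q)" using r1 by (simp add: mult.assoc[symmetric])
  hence r4: "v * Q = 0" using PQ by simp
  have "v * v = v * (P * v)" using r1 by (simp add: mult.assoc[symmetric])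
  hence r5: "v * v = 0" using r3 by simp
  have r6: "cstar v * P = 0" using dual[OF r3] PP by simp
  have r7: "P * cstar v = cstar v" using dual[OF r1] PP by simp
  have r8: "Q * cstar v = 0" using dual[OF r4] QQ by simp
  have r9: "cstar v * Q = cstar v" using dual[OF r2] QQ by simp
  have r10: "cstar v * cstar v = 0" using dual[OF r5] by simp
  define g where "g t = (cos (t*pi/2))^2 *\<^sub>R P + (sin (t*pi/2) * cos (t*pi/2)) *\<^sub>R (v + cstar v)
      + (sin (t*pi/2))^2 *\<^sub>R Q" for t
  have proj: "projection (g t)" for t
  proof -
    define c where "c = cos (t*pi/2)"
    define s where "s = sin (t*pi/2)"
    have cs: "c^2 + s^2 = 1" unfolding c_def s_def by simp
    have gt: "g t = c^2 *\<^sub>R P + (s * c) *\<^sub>R (v + cstar v) + s^2 *\<^sub>R Q" unfolding g_def c_def s_def by simp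
    have "g t * g t = (c^2 * c^2 + (s*c) * (s*c)) *\<^sub>R P + ((c^2 * (s*c)) + (s * c) * s^2) *\<^sub>R v
       + ((c^2 * (s*c)) + (s * c) * s^2) *\<^sub>R cstar v + (s^2 * s^2 + (s*c) * (s*c)) *\<^sub>R Q"
      unfolding gt by (simp add: algebra_simps PP QQ PQ QP r1 r2 r3 r4 r5 r6 r7 r8 r9 r10 vP vQ)
    also have "\<dots> = g t"
    proof -
      have e1: "c^2 * c^2 + (s*c) * (s*c) = c^2"
      proof -
        have "c^2 * c^2 + (s*c) * (s*c) = c^2 * (c^2 + s^2)" by (simp add: power2_eq_square algebra_simps)
        thus ?thesis using cs by simp
      qed
      have e2: "(c^2 * (s*c)) + (s * c) * s^2 = s*c"
      proof -
        have "(c^2 * (s*c)) + (s * c) * s^2 = (s*c) * (c^2 + s^2)" by (simp add: power2_eq_square algebra_simps)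
        thus ?thesis using cs by simp
      qed
      have e3: "s^2 * s^2 + (s*c) * (s*c) = s^2"
      proof -
        have "s^2 * s^2 + (s*c) * (s*c) = s^2 * (c^2 + s^2)" by (simp add: power2_eq_square algebra_simps)
        thus ?thesis using cs by simp
      qed
      show ?thesis unfolding gt e1 e2 e3 by (simp add: algebra_simps)
    qed
    finally have "g t * g t = g t" .
    moreover have "cstar (g t) = g t" unfolding gt using PP QQ by (simp add: algebra_simps)
    ultimately show ?thesis unfolding projection_def by simp
  qed
  have "continuous_on {0..1} g" unfolding g_def by (intro continuous_intros) auto
  moreover have "g 0 = P" unfolding g_def by simp
  moreover have "g 1 = Q" unfolding g_def by simp
  ultimately show ?thesis unfolding homotopic_proj_def using proj by blast
qed

lemma homotopic_trans:
  assumes "homotopic_proj (P::'a::cstar_algebra_1) Q" "homotopic_proj Q R"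
  shows "homotopic_proj P R"
proof -
  obtain g1 :: "real \<Rightarrow> 'a" where g1: "continuous_on {0..1} g1" "\<forall>t\<in>{0..1}. projection (g1 t)" "g1 0 = P" "g1 1 = Q"
    using assms(1) unfolding homotopic_proj_def by blast
  obtain g2 :: "real \<Rightarrow> 'a" where g2: "continuous_on {0..1} g2" "\<forall>t\<in>{0..1}. projection (g2 t)" "g2 0 = Q" "g2 1 = R"
    using assms(2) unfolding homotopic_proj_def by blast
  have "path g1" "path g2" using g1(1) g2(1) by (simp_all add: path_def)
  moreover have "pathfinish g1 = pathstart g2" using g1 g2 by (simp add: pathstart_def pathfinish_def)
  ultimately have "path (g1 +++ g2)" by (rule path_join_imp)
  moreover have "\<forall>t\<in>{0..1}. projection ((g1 +++ g2) t)"
    using g1(2) g2(2) by (auto simp: joinpaths_def)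
  ultimately show ?thesis unfolding homotopic_proj_def path_def[symmetric]
    using g1 g2 by (intro exI[of _ "g1 +++ g2"]) (auto simp: joinpaths_def)
qed

theorem proposition2p5:
  fixes p q r :: "'a::cstar_algebra_1"
  assumes "projection p" and "projection q"
    and "properly_infinite p" and "full p"
    and "properly_infinite q" and "full q"
    and "mvn_equiv p q"
    and "projection r" and "properly_infinite r" and "full r"
    and "p * r = 0" and "q * r = 0"
  shows "homotopic_proj p q"
proof -
  have pp: "p * p = p" "cstar p = p" using assms(1) by (auto simp: projection_def)
  have qq: "q * q = q" "cstar q = q" using assms(2) by (auto simp: projection_def)
  have rr: "r * r = r" "cstar r = r" using assms(8) by (auto simp: projection_def)
  have pr: "p * r = 0" by (rule assms(11))
  have qr: "q * r = 0" by (rule assms(12))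
  obtain y z where yz: "norm (p - y * r * z) < 1"
    using full_approx[OF assms(9) assms(10), of 1 p] by auto
  define a where "a = p - y * r * z"
  define x0 where "x0 = p * (y * r * z) * p"
  define u where "u = p - x0"
  have u_eq: "u = p * a * p"
    by (simp add: u_def x0_def a_def right_diff_distrib left_diff_distrib pp)
  have nu: "norm u < 1"
  proof -
    have "norm u \<le> norm (p * a) * norm p" unfolding u_eq by (rule norm_mult_ineq)
    also have "\<dots> \<le> norm (p * a) * 1" by (rule mult_left_mono[OF proj_norm_le[OF assms(1)]]) simp
    also have "\<dots> \<le> norm p * norm a" by (simp add: norm_mult_ineq)
    also have "\<dots> \<le> 1 * norm a" by (rule mult_right_mono[OF proj_norm_le[OF assms(1)]]) simp
    also have "\<dots> < 1" using yz by (simp add: a_def)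
    finally show ?thesis .
  qed
  have pu: "p * u = u" "u * p = u"
    by (simp add: u_eq pp mult.assoc[symmetric]) (simp add: u_eq pp mult.assoc)
  define N where "N = PS (\<lambda>_. 1) u"
  have Nn: "N * (1 - u) = 1" unfolding N_def by (rule neumann[OF nu])
  have pN: "p * N = N * p" unfolding N_def by (rule ps_commute) (use nu pu in auto)
  define c where "c = p * N * p * y * r"
  define w where "w = r * z * p"
  have x0e: "x0 = (1 - u) * p"
  proof -
    have "(1 - u) * p = p - u" using pu by (simp add: left_diff_distrib)
    thus ?thesis by (simp add: u_def)
  qed
  have cw: "c * w = p"
  proof -
    have "c * w = p * N * (p * (y * (r * r) * z) * p)" unfolding c_def w_def by (simp only: mult.assoc)
    also have "\<dots> = p * N * x0" using rr by (simp add: x0_def)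
    also have "\<dots> = p * (N * (1 - u)) * p" unfolding x0e by (simp only: mult.assoc)
    also have "\<dots> = p" using Nn pp by simp
    finally show ?thesis .
  qed
  have cr: "c * r = c" unfolding c_def using rr by (simp add: mult.assoc)
  have pc: "p * c = c" unfolding c_def using pp by (simp add: mult.assoc[symmetric])
  have rw: "r * w = w" unfolding w_def using rr by (simp add: mult.assoc[symmetric])
  have wp: "w * p = w" unfolding w_def using pp by (simp add: mult.assoc)
  define lam where "lam = norm c + 1"
  have lam: "lam > 0" unfolding lam_def by (simp add: add_nonneg_pos)
  define c' where "c' = (1/lam) *\<^sub>R c"
  define w' where "w' = lam *\<^sub>R w"
  have cw': "c' * w' = p" unfolding c'_def w'_def using lam cw by simp
  have nc': "norm c' < 1" unfolding c'_def using lam by (simp add: lam_def field_simps)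
  have cr': "c' * r = c'" unfolding c'_def using cr by (simp add: scaleR_left_commute)
  have rw': "r * w' = w'" unfolding w'_def using rw by simp
  have wp': "w' * p = w'" unfolding w'_def using wp by (simp add: scaleR_left_commute)
  define D where "D = cstar c' * c'"
  have nD: "norm D < 1"
  proof -
    have "norm D \<le> norm c' * norm c'" unfolding D_def using norm_mult_ineq[of "cstar c'" c'] by simp
    also have "\<dots> \<le> norm c'" by (rule mult_left_le_one_le) (use nc' in auto)
    finally show ?thesis using nc' by simp
  qed
  have cD: "cstar D = D" unfolding D_def by simp
  have rc': "r * cstar c' = cstar c'" using dual[OF cr'] rr by simp
  have rD: "r * D = D" "D * r = D" unfolding D_def using rc' cr'
    by (simp_all add: mult.assoc[symmetric]) (simp add: mult.assoc)
  define Sr where "Sr = r * SQ D"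
  have commr: "r * SQ D = SQ D * r" unfolding SQ_def by (rule ps_commute[OF bco_bound nD]) (simp add: rD)
  have cSr: "cstar Sr = Sr" unfolding Sr_def using commr rr ps_selfadj[OF bco_bound nD cD] by (simp add: SQ_def)
  have SrSr: "Sr * Sr = r - D"
  proof -
    have "Sr * Sr = r * (SQ D * r) * SQ D" unfolding Sr_def by (simp only: mult.assoc)
    also have "\<dots> = r * r * (SQ D * SQ D)" by (simp only: commr[symmetric] mult.assoc)
    also have "\<dots> = r * (1 - D)" using SQ_sq[OF nD] rr by simp
    also have "\<dots> = r - D" using rD by (simp add: right_diff_distrib)
    finally show ?thesis .
  qed
  define R0 where "R0 = Sr * w'"
  have rR0: "r * R0 = R0" unfolding R0_def Sr_def using rr by (simp add: mult.assoc[symmetric])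
  have R0p: "R0 * p = R0" unfolding R0_def using wp' by (simp add: mult.assoc)
  define h where "h = cstar w' * w'"
  have cwr: "cstar w' * r = cstar w'" using dual[OF rw'] rr by simp
  have hR: "h = p + cstar R0 * R0"
  proof -
    have "cstar R0 * R0 = cstar w' * (Sr * Sr) * w'" unfolding R0_def using cSr by (simp add: mult.assoc)
    also have "\<dots> = cstar w' * r * w' - cstar w' * D * w'" unfolding SrSr
      by (simp add: right_diff_distrib left_diff_distrib)
    also have "cstar w' * D * w' = cstar (c' * w') * (c' * w')" unfolding D_def by (simp add: mult.assoc)
    also have "\<dots> = p" using cw' pp by simp
    finally have "cstar R0 * R0 = h - p" using cwr by (simp add: h_def)
    thus ?thesis by simp
  qed
  define \<rho> where "\<rho> = norm R0"
  define M where "M = 1 + (\<rho> + 1)^2"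
  have \<rho>0: "\<rho> \<ge> 0" unfolding \<rho>_def by simp
  have M1: "M > 1" unfolding M_def using \<rho>0 by (simp add: add_pos_nonneg)
  define T where "T = (1 / (\<rho> + 1)) *\<^sub>R R0"
  have nT: "norm T < 1" unfolding T_def using \<rho>0 by (simp add: \<rho>_def[symmetric] field_simps)
  have rT: "r * T = T" unfolding T_def using rR0 by simp
  have Tp: "T * p = T" unfolding T_def using R0p by (simp add: scaleR_left_commute)
  have pos: "norm (p - cstar T * T) \<le> 1"
    by (rule pos_corner[OF assms(1) assms(8) pr rT Tp nT])
  define K where "K = cstar R0 * R0"
  have TT: "cstar T * T = (1 / (\<rho> + 1))^2 *\<^sub>R K"
    unfolding T_def K_def by (simp add: power2_eq_square scaleR_left_commute)
  define v where "v = p - (1/M) *\<^sub>R h"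
  have v_eq: "v = ((\<rho>+1)^2 / M) *\<^sub>R (p - cstar T * T)"
  proof -
    have Mm: "(\<rho>+1)^2 = M - 1" by (simp add: M_def)
    have e1: "1 - 1/M = (\<rho>+1)^2 / M" unfolding Mm using M1 by (simp add: diff_divide_distrib)
    have e2: "(\<rho>+1)^2 / M * (1 / (\<rho> + 1))^2 = 1/M" using \<rho>0 M1 by (simp add: field_simps)
    have "v = (1 - 1/M) *\<^sub>R p - (1/M) *\<^sub>R K" unfolding v_def hR K_def
      by (simp add: scaleR_add_right scaleR_diff_left)
    also have "\<dots> = ((\<rho>+1)^2 / M) *\<^sub>R p - ((\<rho>+1)^2 / M * (1 / (\<rho> + 1))^2) *\<^sub>R K"
      unfolding e1 e2 ..
    also have "\<dots> = ((\<rho>+1)^2 / M) *\<^sub>R (p - cstar T * T)"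
      unfolding TT by (simp add: scaleR_diff_right)
    finally show ?thesis .
  qed
  have nv: "norm v < 1"
  proof -
    have "norm v = ((\<rho>+1)^2 / M) * norm (p - cstar T * T)" unfolding v_eq using M1 by simp
    also have "\<dots> \<le> ((\<rho>+1)^2 / M) * 1" by (rule mult_left_mono[OF pos]) (use M1 in simp)
    also have "\<dots> < 1"
    proof -
      have "(\<rho>+1)^2 < M" by (simp add: M_def)
      hence "(\<rho>+1)^2 / M < 1" using M1 by (simp add: divide_less_eq_1_pos)
      thus ?thesis by simp
    qed
    finally show ?thesis .
  qed
  have cv: "cstar v = v" unfolding v_def h_def using pp by simp
  have pcw: "p * cstar w' = cstar w'" using dual[OF wp'] pp by simp
  have ph: "p * h = h" "h * p = h" unfolding h_def using pcw wp'
    by (simp_all add: mult.assoc[symmetric]) (simp add: mult.assoc)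
  have pv: "p * v = v" "v * p = v" unfolding v_def using pp ph
    by (simp_all add: right_diff_distrib left_diff_distrib)
  define Kk where "Kk = p * ISQ v"
  have commp: "p * ISQ v = ISQ v * p" unfolding ISQ_def by (rule ps_commute[OF aco_bound nv]) (simp add: pv)
  have commv: "v * ISQ v = ISQ v * v" unfolding ISQ_def by (rule ps_commute[OF aco_bound nv]) simp
  have cK: "cstar Kk = Kk" unfolding Kk_def using commp pp ps_selfadj[OF aco_bound nv cv] by (simp add: ISQ_def)
  have Kpv: "Kk * (p - v) = (p - v) * Kk"
  proof -
    have A: "Kk * p = p * Kk" unfolding Kk_def by (simp only: mult.assoc commp[symmetric])
    moreover have B: "Kk * v = v * Kk"
    proof -
      have "Kk * v = p * (v * ISQ v)" unfolding Kk_def using commv by (simp add: mult.assoc)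
      also have "\<dots> = v * ISQ v" using pv by (simp add: mult.assoc[symmetric])
      also have "\<dots> = v * Kk" unfolding Kk_def using pv by (simp add: mult.assoc[symmetric])
      finally show ?thesis .
    qed
    ultimately show ?thesis by (simp only: right_diff_distrib left_diff_distrib A B)
  qed
  have KK: "Kk * Kk * (p - v) = p"
  proof -
    have pve: "p - v = (1 - v) * p" using pv by (simp add: left_diff_distrib)
    have "Kk * Kk = p * (ISQ v * p) * ISQ v" unfolding Kk_def by (simp only: mult.assoc)
    also have "\<dots> = p * p * (ISQ v * ISQ v)" by (simp only: commp[symmetric] mult.assoc)
    finally have "Kk * Kk * (p - v) = p * p * (ISQ v * ISQ v) * ((1 - v) * p)"
      unfolding pve by simp
    also have "\<dots> = p * (ISQ v * ISQ v * (1 - v)) * p" by (simp only: pp(1) mult.assoc)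
    also have "\<dots> = p" using ISQ_sq[OF nv] pp by simp
    finally show ?thesis .
  qed
  define W where "W = (1 / sqrt M) *\<^sub>R w'"
  have WW: "cstar W * W = p - v"
  proof -
    have "cstar W * W = (1 / sqrt M * (1 / sqrt M)) *\<^sub>R h" unfolding W_def h_def
      by (simp add: scaleR_left_commute)
    also have "1 / sqrt M * (1 / sqrt M) = 1 / M"
    proof -
      have "sqrt M * sqrt M = M" using M1 by simp
      have "1 / sqrt M * (1 / sqrt M) = 1 / (sqrt M * sqrt M)" by simp
      thus ?thesis using \<open>sqrt M * sqrt M = M\<close> by simp
    qed
    finally show ?thesis by (simp add: v_def)
  qed
  define V where "V = W * Kk"
  have VV: "cstar V * V = p"
  proof -
    have "cstar V * V = Kk * (cstar W * W) * Kk" unfolding V_def using cK by (simp add: mult.assoc)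
    also have "\<dots> = Kk * Kk * (p - v)" unfolding WW by (simp only: mult.assoc Kpv[symmetric])
    also have "\<dots> = p" by (rule KK)
    finally show ?thesis .
  qed
  have rV: "r * V = V" unfolding V_def W_def using rw' by (simp add: mult.assoc[symmetric])
  define e where "e = V * cstar V"
  have Vp: "V * p = V" by (rule pisom_right[OF VV assms(1)])
  have eproj: "projection e"
  proof -
    have "e * e = V * (cstar V * V) * cstar V" unfolding e_def by (simp only: mult.assoc)
    also have "\<dots> = e" unfolding VV Vp e_def ..
    finally show ?thesis unfolding projection_def e_def by simp
  qed
  have pV: "p * V = 0"
  proof -
    have "p * V = (p * r) * V" using rV by (simp add: mult.assoc)
    thus ?thesis using pr by simp
  qed
  have qV: "q * V = 0"
  proof -
    have "q * V = (q * r) * V" using rV by (simp add: mult.assoc)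
    thus ?thesis using qr by simp
  qed
  have pe: "p * e = 0" unfolding e_def using pV by (simp add: mult.assoc[symmetric])
  have qe: "q * e = 0" unfolding e_def using qV by (simp add: mult.assoc[symmetric])
  have eq: "e * q = 0" using dual[OF qe] eproj qq by (simp add: projection_def)
  obtain v0 where v0: "cstar v0 * v0 = p" "v0 * cstar v0 = q" using assms(7) unfolding mvn_equiv_def by blast
  have v0p: "v0 * p = v0" by (rule pisom_right[OF v0(1) assms(1)])
  define t where "t = V * cstar v0"
  have tt1: "cstar t * t = q"
  proof -
    have "cstar t * t = v0 * (cstar V * V) * cstar v0" unfolding t_def by (simp add: mult.assoc)
    also have "\<dots> = q" unfolding VV v0p v0(2) ..
    finally show ?thesis .
  qed
  have tt2: "t * cstar t = e"
  proof -
    have "t * cstar t = V * (cstar v0 * v0) * cstar V" unfolding t_def by (simp add: mult.assoc)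
    also have "\<dots> = e" unfolding v0(1) Vp e_def ..
    finally show ?thesis .
  qed
  have h1: "homotopic_proj p e" by (rule rotation[OF assms(1) eproj VV _ pe]) (simp add: e_def)
  have h2: "homotopic_proj e q"
    by (rule rotation[OF eproj assms(2) _ _ eq, of "cstar t"]) (simp_all add: tt1 tt2)
  show ?thesis by (rule homotopic_trans[OF h1 h2])
qed

end
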